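(* Fix a mass ratio $0<\mu<1$ and set $e=(1-\mu,0)$, $s=(-\mu,0)$. Let $$V(q)=-\frac{\mu}{|q-e|}-\frac{1-\mu}{|q-s|}-\frac12|q|^2,\qquad q\in\mathbb{R}^2\setminus\{e,s\},$$ and consider the planar circular restricted three-body problem, i.e. the Hamiltonian $H(q,p)=\tfrac12\big((p_1+q_2)^2+(p_2-q_1)^2\big)+V(q)$ on $T^*(\mathbb{R}^2\setminus\{e,s\})$ with the standard symplectic form, whose solutions in configuration space satisfy $$\ddot q_1=2\dot q_2-\frac{\partial V}{\partial q_1}(q),\qquad \ddot q_2=-2\dot q_1-\frac{\partial V}{\partial q_2}(q).$$ Let $\ell_2$ and $\ell_3$ be the collinear Lagrange points defined in the context, and let $c<\min\{V(\ell_2),V(\ell_3)\}$. Then every periodic solution $x\colon\mathbb{R}\to\mathbb{R}^2\setminus\{e,s\}$ of these equations with energy $c$ whose image lies in the bounded Hill's region $\mathfrak{K}_c^b$ has at least two distinct syzygies during each period: if $T>0$ is a period of $x$, there exist at least two distinct times $t\in[0,T)$ with $x_2(t)=0$.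
   Context: The function $u(x)=V(x,0)$ restricted to the $q_1$-axis is strictly concave on each of the intervals $(-\infty,-\mu)$, $(-\mu,1-\mu)$, $(1-\mu,\infty)$ and tends to $-\infty$ at their endpoints. Its unique maxima on these intervals are denoted $\ell_3\in(-\infty,-\mu)$, $\ell_1\in(-\mu,1-\mu)$ and $\ell_2\in(1-\mu,\infty)$ (viewed as points $(\ell_i,0)$ of the plane). These are critical points of $V$ with $V(\ell_1)<V(\ell_2)$ and $V(\ell_1)<V(\ell_3)$. The energy of a solution is the constant value of $H$ along it, where $p=(\dot q_1-q_2,\dot q_2+q_1)$. The Hill's region at energy $c$ is $\mathfrak{K}_c=\{q\in\mathbb{R}^2\setminus\{e,s\}: V(q)\le c\}$. For $c<\min\{V(\ell_2),V(\ell_3)\}$, $\mathfrak{K}_c$ splits into one unbounded connected component and a bounded part $\mathfrak{K}_c^b$, namely the union of the bounded connected components. If $V(\ell_1)\le c$, this bounded part is a single component containing $e$ and $s$ in its closure. If $c<V(\ell_1)$, it consists of two components, one around each of $e$ and $s$. A syzygy of $x$ is a time at which $x$ lies on the $q_1$-axis, i.e. $x_2(t)=0$. *)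

theory Defs
  imports "HOL-Analysis.Analysis"
begin

definition earth :: "real \<Rightarrow> real \<times> real" where
  "earth \<mu> = (1 - \<mu>, 0)"

definition sun :: "real \<Rightarrow> real \<times> real" where
  "sun \<mu> = (- \<mu>, 0)"

definition V :: "real \<Rightarrow> real \<times> real \<Rightarrow> real" where
  "V \<mu> q = - \<mu> / norm (q - earth \<mu>) - (1 - \<mu>) / norm (q - sun \<mu>) - (1/2) * (norm q)\<^sup>2"

definition dV1 :: "real \<Rightarrow> real \<times> real \<Rightarrow> real" where
  "dV1 \<mu> q = deriv (\<lambda>a. V \<mu> (a, snd q)) (fst q)"

definition dV2 :: "real \<Rightarrow> real \<times> real \<Rightarrow> real" where
  "dV2 \<mu> q = deriv (\<lambda>b. V \<mu> (fst q, b)) (snd q)"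

definition H :: "real \<Rightarrow> real \<times> real \<Rightarrow> real \<times> real \<Rightarrow> real" where
  "H \<mu> q p = (1/2) * ((fst p + snd q)\<^sup>2 + (snd p - fst q)\<^sup>2) + V \<mu> q"

definition ell2 :: "real \<Rightarrow> real \<times> real" where
  "ell2 \<mu> = ((THE x. x \<in> {1 - \<mu><..} \<and> (\<forall>y\<in>{1 - \<mu><..}. V \<mu> (y, 0) \<le> V \<mu> (x, 0))), 0)"

definition ell3 :: "real \<Rightarrow> real \<times> real" where
  "ell3 \<mu> = ((THE x. x \<in> {..<- \<mu>} \<and> (\<forall>y\<in>{..<- \<mu>}. V \<mu> (y, 0) \<le> V \<mu> (x, 0))), 0)"

definition hill :: "real \<Rightarrow> real \<Rightarrow> (real \<times> real) set" where
  "hill \<mu> c = {q. q \<noteq> earth \<mu> \<and> q \<noteq> sun \<mu> \<and> V \<mu> q \<le> c}"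

definition hill_bounded :: "real \<Rightarrow> real \<Rightarrow> (real \<times> real) set" where
  "hill_bounded \<mu> c = \<Union> {C \<in> components (hill \<mu> c). bounded C}"

definition is_solution :: "real \<Rightarrow> (real \<Rightarrow> real \<times> real) \<Rightarrow> (real \<Rightarrow> real \<times> real) \<Rightarrow> (real \<Rightarrow> real \<times> real) \<Rightarrow> bool" where
  "is_solution \<mu> x x' x'' \<longleftrightarrow>
     (\<forall>t. x t \<noteq> earth \<mu> \<and> x t \<noteq> sun \<mu>) \<and>
     (\<forall>t. (x has_vector_derivative x' t) (at t)) \<and>
     (\<forall>t. (x' has_vector_derivative x'' t) (at t)) \<and>
     (\<forall>t. fst (x'' t) = 2 * snd (x' t) - dV1 \<mu> (x t) \<and>
          snd (x'' t) = - 2 * fst (x' t) - dV2 \<mu> (x t))"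

definition has_energy :: "real \<Rightarrow> (real \<Rightarrow> real \<times> real) \<Rightarrow> (real \<Rightarrow> real \<times> real) \<Rightarrow> real \<Rightarrow> bool" where
  "has_energy \<mu> x x' c \<longleftrightarrow>
     (\<forall>t. H \<mu> (x t) (fst (x' t) - snd (x t), snd (x' t) + fst (x t)) = c)"

end

theory Submission
  imports Defs
begin

lemma V_coord: "V \<mu> (a,b) = - \<mu> / sqrt ((a - (1-\<mu>))\<^sup>2 + b\<^sup>2) - (1-\<mu>) / sqrt ((a+\<mu>)\<^sup>2 + b\<^sup>2) - (a\<^sup>2+b\<^sup>2)/2"
  by (simp add: V_def earth_def sun_def norm_Pair)

definition fq :: "real \<Rightarrow> real \<Rightarrow> real \<Rightarrow> real" where
  "fq \<mu> a b = \<mu> / sqrt ((a - (1-\<mu>))\<^sup>2 + b\<^sup>2) ^ 3 + (1-\<mu>) / sqrt ((a+\<mu>)\<^sup>2 + b\<^sup>2) ^ 3"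

lemma inv_sqrt_deriv:
  fixes K b :: real assumes "K + b\<^sup>2 > 0"
  shows "((\<lambda>y. 1 / sqrt (K + y\<^sup>2)) has_real_derivative - b / sqrt (K + b\<^sup>2) ^ 3) (at b)"
proof -
  have s: "sqrt (K + b\<^sup>2) > 0" using assms by simp
  have e: "sqrt (K + b\<^sup>2) ^ 3 = (K + b\<^sup>2) * sqrt (K + b\<^sup>2)"
    using assms by (simp add: power3_eq_cube)
  have "((\<lambda>y. sqrt (K + y\<^sup>2)) has_real_derivative b / sqrt (K + b\<^sup>2)) (at b)"
    using assms by (auto intro!: derivative_eq_intros simp: field_simps)
  then have "((\<lambda>y. inverse (sqrt (K + y\<^sup>2))) has_real_derivative - ((b / sqrt (K + b\<^sup>2)) * inverse (sqrt (K + b\<^sup>2) ^ Suc (Suc 0)))) (at b)"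
    using s by (intro DERIV_inverse_fun) auto
  moreover have "- ((b / sqrt (K + b\<^sup>2)) * inverse (sqrt (K + b\<^sup>2) ^ Suc (Suc 0))) = - b / sqrt (K + b\<^sup>2) ^ 3"
    using s assms unfolding e by (simp add: field_simps)
  ultimately have "((\<lambda>y. inverse (sqrt (K + y\<^sup>2))) has_real_derivative - b / sqrt (K + b\<^sup>2) ^ 3) (at b)" by simp
  then show ?thesis by (simp only: inverse_eq_divide)
qed

lemma V_deriv:
  assumes "(a,b) \<noteq> earth \<mu>" "(a,b) \<noteq> sun \<mu>"
  shows "((\<lambda>y. V \<mu> (a,y)) has_real_derivative b * (fq \<mu> a b - 1)) (at b)"
proof -
  have u: "(a - (1-\<mu>))\<^sup>2 + b\<^sup>2 > 0" using assms by (auto simp: earth_def sun_def sum_power2_gt_zero_iff)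
  have w: "(a+\<mu>)\<^sup>2 + b\<^sup>2 > 0" using assms by (auto simp: earth_def sun_def sum_power2_gt_zero_iff)
  note d1 = inv_sqrt_deriv[OF u]
  note d2 = inv_sqrt_deriv[OF w]
  have "((\<lambda>y. - \<mu> * (1 / sqrt ((a - (1-\<mu>))\<^sup>2 + y\<^sup>2)) - (1-\<mu>) * (1 / sqrt ((a+\<mu>)\<^sup>2 + y\<^sup>2)) - (a\<^sup>2+y\<^sup>2)/2) has_real_derivative
     - \<mu> * (- b / sqrt ((a - (1-\<mu>))\<^sup>2 + b\<^sup>2) ^ 3) - (1-\<mu>) * (- b / sqrt ((a+\<mu>)\<^sup>2 + b\<^sup>2) ^ 3) - b) (at b)"
  proof -
    have q: "((\<lambda>y. (a\<^sup>2+y\<^sup>2)/2) has_real_derivative b) (at b)"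
      by (auto intro!: derivative_eq_intros)
    show ?thesis by (intro DERIV_diff DERIV_cmult d1 d2 q)
  qed
  moreover have "(\<lambda>y. V \<mu> (a,y)) = (\<lambda>y. - \<mu> * (1 / sqrt ((a - (1-\<mu>))\<^sup>2 + y\<^sup>2)) - (1-\<mu>) * (1 / sqrt ((a+\<mu>)\<^sup>2 + y\<^sup>2)) - (a\<^sup>2+y\<^sup>2)/2)"
    by (simp add: V_coord fun_eq_iff)
  moreover have "- \<mu> * (- b / sqrt ((a - (1-\<mu>))\<^sup>2 + b\<^sup>2) ^ 3) - (1-\<mu>) * (- b / sqrt ((a+\<mu>)\<^sup>2 + b\<^sup>2) ^ 3) - b = b * (fq \<mu> a b - 1)"
    unfolding fq_def by (simp add: algebra_simps)
  ultimately show ?thesis by simp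
qed

lemma snd_deriv:
  assumes "(f has_vector_derivative v) (at t)"
  shows "((\<lambda>t. snd (f t)) has_real_derivative snd v) (at t)"
proof -
  have "((\<lambda>t. snd (f t)) has_derivative (\<lambda>x. snd (x *\<^sub>R v))) (at t)"
    using assms unfolding has_vector_derivative_def by (rule has_derivative_snd)
  moreover have "(\<lambda>x. snd (x *\<^sub>R v)) = (*) (snd v)" by (auto simp: fun_eq_iff)
  ultimately show ?thesis unfolding has_field_derivative_def by simp
qed

lemma fst_deriv:
  assumes "(f has_vector_derivative v) (at t)"
  shows "((\<lambda>t. fst (f t)) has_real_derivative fst v) (at t)"
proof -
  have "((\<lambda>t. fst (f t)) has_derivative (\<lambda>x. fst (x *\<^sub>R v))) (at t)"
    using assms unfolding has_vector_derivative_def by (rule has_derivative_fst)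
  moreover have "(\<lambda>x. fst (x *\<^sub>R v)) = (*) (fst v)" by (auto simp: fun_eq_iff)
  ultimately show ?thesis unfolding has_field_derivative_def by simp
qed

lemma fq_mono:
  assumes "0 < \<mu>" "\<mu> < 1" "b \<noteq> 0" "b\<^sup>2 \<le> c\<^sup>2"
  shows "fq \<mu> a c \<le> fq \<mu> a b"
proof -
  have m: "sqrt (K + b\<^sup>2) ^ 3 \<le> sqrt (K + c\<^sup>2) ^ 3" if "K \<ge> 0" for K
    using that assms(4) by (intro power_mono) auto
  have p: "0 < sqrt (K + b\<^sup>2) ^ 3" if "K \<ge> 0" for K
    using that assms(3) by (simp add: add_nonneg_pos)
  have "\<mu> / sqrt ((a - (1-\<mu>))\<^sup>2 + c\<^sup>2) ^ 3 \<le> \<mu> / sqrt ((a - (1-\<mu>))\<^sup>2 + b\<^sup>2) ^ 3"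
    using assms(1) m[of "(a - (1-\<mu>))\<^sup>2"] p[of "(a - (1-\<mu>))\<^sup>2"]
    by (intro divide_left_mono) auto
  moreover have "(1-\<mu>) / sqrt ((a + \<mu>)\<^sup>2 + c\<^sup>2) ^ 3 \<le> (1-\<mu>) / sqrt ((a + \<mu>)\<^sup>2 + b\<^sup>2) ^ 3"
    using assms(2) m[of "(a + \<mu>)\<^sup>2"] p[of "(a + \<mu>)\<^sup>2"]
    by (intro divide_left_mono) auto
  ultimately show ?thesis unfolding fq_def by linarith
qed

lemma ray_V:
  assumes "0 < \<mu>" "\<mu> < 1" "b \<noteq> 0" "fq \<mu> a b \<le> 1" "1 \<le> t"
  shows "V \<mu> (a, b * t) \<le> V \<mu> (a, b)"
proof -
  have "V \<mu> (a, b * t) \<le> V \<mu> (a, b * 1)"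
  proof (rule DERIV_nonpos_imp_nonincreasing[of 1 t "\<lambda>s. V \<mu> (a, b * s)"])
    show "1 \<le> t" by fact
    fix s :: real assume s: "1 \<le> s" "s \<le> t"
    have bs: "b * s \<noteq> 0" using s assms(3) by auto
    have ne: "(a, b * s) \<noteq> earth \<mu>" "(a, b * s) \<noteq> sun \<mu>" using bs by (auto simp: earth_def sun_def)
    have d: "((\<lambda>y. V \<mu> (a,y)) has_real_derivative (b * s) * (fq \<mu> a (b * s) - 1)) (at (b * s))"
      by (rule V_deriv[OF ne])
    have "((\<lambda>s. V \<mu> (a, b * s)) has_real_derivative (b * s) * (fq \<mu> a (b * s) - 1) * b) (at s)"
    proof -
      have g: "((\<lambda>s. b * s) has_real_derivative b) (at s)" by (auto intro!: derivative_eq_intros)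
      show ?thesis using DERIV_chain2[where f="\<lambda>y. V \<mu> (a,y)" and g="\<lambda>s. b * s" and x=s, OF d g] by simp
    qed
    moreover have "fq \<mu> a (b * s) \<le> fq \<mu> a b"
    proof (rule fq_mono[OF assms(1,2,3)])
      have "1 \<le> s\<^sup>2" using s by (simp add: one_le_power)
      then have "b\<^sup>2 * 1 \<le> b\<^sup>2 * s\<^sup>2" by (intro mult_left_mono) auto
      then show "b\<^sup>2 \<le> (b * s)\<^sup>2" by (simp add: power_mult_distrib)
    qed
    moreover have "(b * s) * (fq \<mu> a (b * s) - 1) * b = s * b\<^sup>2 * (fq \<mu> a (b * s) - 1)"
      by (simp add: power2_eq_square)
    moreover have "s * b\<^sup>2 * (fq \<mu> a (b * s) - 1) \<le> 0"
      using s assms(4) calculation(2) by (intro mult_nonneg_nonpos) auto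
    ultimately show "\<exists>y. ((\<lambda>s. V \<mu> (a, b * s)) has_real_derivative y) (at s) \<and> y \<le> 0"
      by metis
  qed
  then show ?thesis by simp
qed

lemma region:
  assumes "0 < \<mu>" "\<mu> < 1" "q \<in> hill_bounded \<mu> c" "snd q \<noteq> 0"
  shows "fq \<mu> (fst q) (snd q) > 1"
proof (rule ccontr)
  assume "\<not> ?thesis"
  then have f: "fq \<mu> (fst q) (snd q) \<le> 1" by simp
  obtain C where C: "C \<in> components (hill \<mu> c)" "bounded C" "q \<in> C"
    using assms(3) unfolding hill_bounded_def by auto
  have qh: "q \<in> hill \<mu> c" using C in_components_subset by blast
  define R where "R = (\<lambda>t. (fst q, snd q * t)) ` {1..}"
  have "connected R" unfolding R_def
    by (intro connected_continuous_image) (auto intro!: continuous_intros)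
  moreover have "R \<subseteq> hill \<mu> c"
  proof
    fix p assume "p \<in> R"
    then obtain t where t: "t \<ge> 1" "p = (fst q, snd q * t)" unfolding R_def by auto
    have "V \<mu> p \<le> V \<mu> (fst q, snd q)" using ray_V[OF assms(1,2,4) f t(1)] t(2) by simp
    also have "\<dots> \<le> c" using qh by (simp add: hill_def)
    finally show "p \<in> hill \<mu> c" using t assms(4) by (auto simp: hill_def earth_def sun_def)
  qed
  moreover have "q \<in> R" unfolding R_def by (auto intro!: image_eqI[of _ _ 1])
  ultimately have "R \<subseteq> C" using components_maximal[OF C(1)] C(3) by blast
  then have "bounded R" using C(2) bounded_subset by blast
  then obtain B where B: "\<And>p. p \<in> R \<Longrightarrow> norm p \<le> B" unfolding bounded_iff by blast
  define t where "t = max 1 ((\<bar>B\<bar> + 1) / \<bar>snd q\<bar>)"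
  have t1: "t \<ge> 1" unfolding t_def by simp
  have "(fst q, snd q * t) \<in> R" unfolding R_def using t1 by auto
  then have "norm (fst q, snd q * t) \<le> B" by (rule B)
  moreover have "\<bar>snd q * t\<bar> \<le> norm (fst q, snd q * t)"
    by (metis norm_snd_le real_norm_def snd_conv)
  moreover have "\<bar>snd q * t\<bar> \<ge> \<bar>B\<bar> + 1"
  proof -
    have "t \<ge> (\<bar>B\<bar> + 1) / \<bar>snd q\<bar>" unfolding t_def by simp
    then have "\<bar>snd q\<bar> * t \<ge> \<bar>B\<bar> + 1" using assms(4) by (simp add: field_simps)
    then show ?thesis using t1 by (simp add: abs_mult)
  qed
  ultimately show False by linarith
qed


theorem theorem1p1:
  fixes \<mu> c T :: real and x x' x'' :: "real \<Rightarrow> real \<times> real"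
  assumes "0 < \<mu>" and "\<mu> < 1"
    and "c < min (V \<mu> (ell2 \<mu>)) (V \<mu> (ell3 \<mu>))"
    and "is_solution \<mu> x x' x''"
    and "has_energy \<mu> x x' c"
    and "range x \<subseteq> hill_bounded \<mu> c"
    and "T > 0" and "\<forall>t. x (t + T) = x t"
  shows "\<exists>t1 t2. t1 \<in> {0..<T} \<and> t2 \<in> {0..<T} \<and> t1 \<noteq> t2 \<and> snd (x t1) = 0 \<and> snd (x t2) = 0"
proof (rule ccontr)
  assume nz: "\<not> ?thesis"
  note sol = assms(4)[unfolded is_solution_def]
  have per: "x (t + T) = x t" for t using assms(8) by simp
  have dx: "(x has_vector_derivative x' t) (at t)" for t using sol by blast
  have dx': "(x' has_vector_derivative x'' t) (at t)" for t using sol by blast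
  have eq2: "snd (x'' t) = - 2 * fst (x' t) - dV2 \<mu> (x t)" for t using sol by blast
  have ne: "x t \<noteq> earth \<mu>" "x t \<noteq> sun \<mu>" for t using sol by blast+
  have per': "x' (t + T) = x' t" for t
  proof -
    have "((\<lambda>s. x (s + T)) has_vector_derivative x' (t + T)) (at t)"
    proof -
      have "((\<lambda>s. s + T) has_vector_derivative 1) (at t)"
        by (auto intro!: derivative_eq_intros)
      moreover have "(x has_vector_derivative x' (t + T)) (at ((\<lambda>s. s + T) t))" using dx by simp
      ultimately show ?thesis using vector_diff_chain_at[of "\<lambda>s. s + T" 1 t x "x' (t + T)"]
        by (simp add: o_def)
    qed
    then have "(x has_vector_derivative x' (t + T)) (at t)" using per by simp
    then show ?thesis using dx vector_derivative_unique_at by blast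
  qed
  have dV2eq: "dV2 \<mu> (x t) = snd (x t) * (fq \<mu> (fst (x t)) (snd (x t)) - 1)" for t
  proof -
    have "(fst (x t), snd (x t)) \<noteq> earth \<mu>" "(fst (x t), snd (x t)) \<noteq> sun \<mu>" using ne[of t] by auto
    from V_deriv[OF this] show ?thesis unfolding dV2_def by (rule DERIV_imp_deriv)
  qed
  define F where "F t = snd (x' t) + 2 * fst (x t)" for t
  have dF: "(F has_real_derivative - dV2 \<mu> (x t)) (at t)" for t
  proof -
    have "(F has_real_derivative snd (x'' t) + 2 * fst (x' t)) (at t)"
      unfolding F_def[abs_def]
      by (intro DERIV_add DERIV_cmult snd_deriv fst_deriv dx dx')
    then show ?thesis using eq2[of t] by simp
  qed
  have Fper: "F (t + T) = F t" for t unfolding F_def using per per' by simp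
  obtain t0 where t0: "\<And>s. t0 < s \<Longrightarrow> s < t0 + T \<Longrightarrow> snd (x s) \<noteq> 0"
  proof (cases "\<exists>z\<in>{0..<T}. snd (x z) = 0")
    case True
    then obtain z where z: "z \<in> {0..<T}" "snd (x z) = 0" by blast
    show ?thesis
    proof (rule that[of z])
      fix s assume s: "z < s" "s < z + T"
      show "snd (x s) \<noteq> 0"
      proof
        assume s0: "snd (x s) = 0"
        show False
        proof (cases "s < T")
          case True
          have "s \<in> {0..<T}" "z \<noteq> s" using True z(1) s by auto
          then show False using nz z s0 by blast
        next
          case False
          have "x (s - T) = x s" using per[of "s - T"] by simp
          moreover have "s - T \<in> {0..<T}" "z \<noteq> s - T" using False z(1) s by auto
          ultimately show False using nz z s0 by (metis)
        qed
      qed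
    qed
  next
    case False
    show ?thesis
    proof (rule that[of 0])
      fix s assume "0 < s" "s < 0 + T"
      then show "snd (x s) \<noteq> 0" using False by auto
    qed
  qed
  have "\<exists>z. t0 < z \<and> z < t0 + T \<and> (F has_real_derivative 0) (at z)"
  proof (rule Rolle)
    show "t0 < t0 + T" using assms(7) by simp
    show "F t0 = F (t0 + T)" using Fper by simp
    show "continuous_on {t0..t0 + T} F"
      using dF by (meson DERIV_isCont continuous_at_imp_continuous_on)
    show "F differentiable (at z)" for z using dF real_differentiable_def by blast
  qed
  then obtain z where z: "t0 < z" "z < t0 + T" "(F has_real_derivative 0) (at z)" by blast
  then have "dV2 \<mu> (x z) = 0" using dF[of z] DERIV_unique by fastforce
  moreover have "snd (x z) \<noteq> 0" using t0 z by blast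
  moreover have "fq \<mu> (fst (x z)) (snd (x z)) > 1"
    using region[OF assms(1,2) _ \<open>snd (x z) \<noteq> 0\<close>] assms(6) by blast
  ultimately show False using dV2eq[of z] by simp
qed

end
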